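(* Let $\alpha\in\ell^\infty_w$ satisfy $G_{\tilde\psi,\psi}\alpha=\alpha$. Then there exists $f\in\mathcal H^\infty_w$ with $C_{\tilde\psi}f=\alpha$, i.e. $\alpha\in R(C_{\tilde\psi})$.
   Context: Standing setting. $\mathcal H$ is a separable complex Hilbert space with inner product $\langle\cdot,\cdot\rangle$, linear in the first and conjugate-linear in the second argument. $X$ is a countable index set. A weight is a map $w:X\to(0,\infty)$; $\ell^\infty_w$ is the Banach space of sequences $\alpha=(\alpha_k)_{k\in X}$ with $\|\alpha\|_{\ell^\infty_w}:=\sup_{k\in X}|\alpha_k|w(k)<\infty$. $\psi=(\psi_k)_{k\in X}$ is a frame for $\mathcal H$ and $\tilde\psi=(\tilde\psi_k)_{k\in X}$ is a dual frame, i.e. $f=\sum_{k}\langle f,\tilde\psi_k\rangle\psi_k=\sum_k\langle f,\psi_k\rangle\tilde\psi_k$ for all $f\in\mathcal H$ (unconditional convergence in $\mathcal H$). The cross Gram matrix $G_{\tilde\psi,\psi}$ has entries $(G_{\tilde\psi,\psi})_{k,l}=\langle\psi_l,\tilde\psi_k\rangle$ and acts by $(G_{\tilde\psi,\psi}\alpha)_k=\sum_{l\in X}\langle\psi_l,\tilde\psi_k\rangle\alpha_l$; it is assumed to define a bounded operator on $\ell^\infty_w$, meaning these series converge absolutely for every $\alpha\in\ell^\infty_w$ and $G_{\tilde\psi,\psi}:\ell^\infty_w\to\ell^\infty_w$ is bounded (equivalently $\|G_{\tilde\psi,\psi}\|_{\mathcal B(\ell^\infty_w)}=\sup_{k}\sum_{l}|\langle\psi_l,\tilde\psi_k\rangle|\,w(k)/w(l)<\infty$).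 Let $\mathcal H^{00}:=\operatorname{span}\{\tilde\psi_k:k\in X\}$ (finite linear combinations), a dense subspace of $\mathcal H$. Equip $\mathcal H$ with the locally convex topology $\sigma(\mathcal H,\mathcal H^{00})$ generated by the seminorms $f\mapsto|\langle f,v\rangle|$, $v\in\mathcal H^{00}$ (Hausdorff and metrizable). Let $\overline{\mathcal H}$ be the completion of $\mathcal H$ in this topology, with $\mathcal H\subseteq\overline{\mathcal H}$, and for each $v\in\mathcal H^{00}$ let $f\mapsto\langle f,v\rangle_{\overline{\mathcal H},\mathcal H^{00}}$ be the unique continuous linear extension of $f\mapsto\langle f,v\rangle$ to $\overline{\mathcal H}$. Define $\mathcal H^\infty_w$ as the set of all $f\in\overline{\mathcal H}$ for which there is a sequence $(f_n)_{n\ge1}\subseteq\mathcal H$ converging to $f$ in $\sigma(\overline{\mathcal H},\mathcal H^{00})$ (i.e. $\langle f_n,v\rangle\to\langle f,v\rangle_{\overline{\mathcal H},\mathcal H^{00}}$ for all $v\in\mathcal H^{00}$) with $\sup_{n\in\mathbb N,k\in X}|\langle f_n,\tilde\psi_k\rangle|w(k)<\infty$. The coefficient operator is $C_{\tilde\psi}:\mathcal H^\infty_w\to\ell^\infty_w$, $C_{\tilde\psi}f=(\langle f,\tilde\psi_k\rangle_{\overline{\mathcal H},\mathcal H^{00}})_{k\in X}$, and $R(C_{\tilde\psi})$ denotes its range. *)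

theory Defs
  imports "HOL-Analysis.Analysis"
begin

definition hnorm :: "('h \<Rightarrow> 'h \<Rightarrow> complex) \<Rightarrow> 'h \<Rightarrow> real" where
  "hnorm ip x = sqrt (Re (ip x x))"

definition complex_hilbert ::
  "(complex \<Rightarrow> 'h::ab_group_add \<Rightarrow> 'h) \<Rightarrow> ('h \<Rightarrow> 'h \<Rightarrow> complex) \<Rightarrow> bool" where
  "complex_hilbert sc ip \<longleftrightarrow>
     (\<forall>x. sc 1 x = x) \<and>
     (\<forall>a b x. sc a (sc b x) = sc (a * b) x) \<and>
     (\<forall>a x y. sc a (x + y) = sc a x + sc a y) \<and>
     (\<forall>a b x. sc (a + b) x = sc a x + sc b x) \<and>
     (\<forall>x y z. ip (x + y) z = ip x z + ip y z) \<and>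
     (\<forall>a x y. ip (sc a x) y = a * ip x y) \<and>
     (\<forall>x y. ip y x = cnj (ip x y)) \<and>
     (\<forall>x. 0 \<le> Re (ip x x)) \<and>
     (\<forall>x. ip x x = 0 \<longrightarrow> x = 0) \<and>
     (\<forall>xs :: nat \<Rightarrow> 'h.
        (\<forall>e>0. \<exists>N. \<forall>m\<ge>N. \<forall>n\<ge>N. hnorm ip (xs m - xs n) < e) \<longrightarrow>
        (\<exists>x. (\<lambda>n. hnorm ip (xs n - x)) \<longlonglongrightarrow> 0)) \<and>
     (\<exists>D. countable D \<and> (\<forall>x e. e > 0 \<longrightarrow> (\<exists>d\<in>D. hnorm ip (x - d) < e)))"

text \<open>Unconditional convergence in H of the series sum_k c_k psi_k to f
  (convergence of the net of finite partial sums).\<close>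
definition hsums ::
  "(complex \<Rightarrow> 'h::ab_group_add \<Rightarrow> 'h) \<Rightarrow> ('h \<Rightarrow> 'h \<Rightarrow> complex) \<Rightarrow>
   ('i \<Rightarrow> complex) \<Rightarrow> ('i \<Rightarrow> 'h) \<Rightarrow> 'h \<Rightarrow> bool" where
  "hsums sc ip c \<psi> f \<longleftrightarrow>
     (\<forall>e>0. \<exists>F. finite F \<and>
        (\<forall>G. finite G \<and> F \<subseteq> G \<longrightarrow> hnorm ip (f - (\<Sum>k\<in>G. sc (c k) (\<psi> k))) < e))"

definition is_frame :: "('h \<Rightarrow> 'h \<Rightarrow> complex) \<Rightarrow> ('i \<Rightarrow> 'h) \<Rightarrow> bool" where
  "is_frame ip \<psi> \<longleftrightarrow>
     (\<exists>A B. 0 < A \<and> 0 < B \<and>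
        (\<forall>f. (\<lambda>k. (cmod (ip f (\<psi> k)))\<^sup>2) summable_on UNIV \<and>
             A * (hnorm ip f)\<^sup>2 \<le> (\<Sum>\<^sub>\<infinity>k. (cmod (ip f (\<psi> k)))\<^sup>2) \<and>
             (\<Sum>\<^sub>\<infinity>k. (cmod (ip f (\<psi> k)))\<^sup>2) \<le> B * (hnorm ip f)\<^sup>2))"

definition is_dual_frame ::
  "(complex \<Rightarrow> 'h::ab_group_add \<Rightarrow> 'h) \<Rightarrow> ('h \<Rightarrow> 'h \<Rightarrow> complex) \<Rightarrow>
   ('i \<Rightarrow> 'h) \<Rightarrow> ('i \<Rightarrow> 'h) \<Rightarrow> bool" where
  "is_dual_frame sc ip \<psi> \<psi>d \<longleftrightarrow>
     is_frame ip \<psi> \<and> is_frame ip \<psi>d \<and>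
     (\<forall>f. hsums sc ip (\<lambda>k. ip f (\<psi>d k)) \<psi> f \<and> hsums sc ip (\<lambda>k. ip f (\<psi> k)) \<psi>d f)"

definition linf_w :: "('i \<Rightarrow> real) \<Rightarrow> ('i \<Rightarrow> complex) set" where
  "linf_w w = {\<alpha>. \<exists>M. \<forall>k. cmod (\<alpha> k) * w k \<le> M}"

definition gram :: "('h \<Rightarrow> 'h \<Rightarrow> complex) \<Rightarrow> ('i \<Rightarrow> 'h) \<Rightarrow> ('i \<Rightarrow> 'h) \<Rightarrow> 'i \<Rightarrow> 'i \<Rightarrow> complex" where
  "gram ip \<psi>d \<psi> k l = ip (\<psi> l) (\<psi>d k)"

definition gram_apply ::
  "('h \<Rightarrow> 'h \<Rightarrow> complex) \<Rightarrow> ('i \<Rightarrow> 'h) \<Rightarrow> ('i \<Rightarrow> 'h) \<Rightarrow> ('i \<Rightarrow> complex) \<Rightarrow> 'i \<Rightarrow> complex" where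
  "gram_apply ip \<psi>d \<psi> \<alpha> k = (\<Sum>\<^sub>\<infinity>l. gram ip \<psi>d \<psi> k l * \<alpha> l)"

text \<open>G is a bounded operator on l^infty_w: sup_k sum_l |G_kl| w(k)/w(l) < infinity.\<close>
definition gram_bounded_w ::
  "('h \<Rightarrow> 'h \<Rightarrow> complex) \<Rightarrow> ('i \<Rightarrow> 'h) \<Rightarrow> ('i \<Rightarrow> 'h) \<Rightarrow> ('i \<Rightarrow> real) \<Rightarrow> bool" where
  "gram_bounded_w ip \<psi>d \<psi> w \<longleftrightarrow>
     (\<exists>M. \<forall>k. (\<lambda>l. cmod (gram ip \<psi>d \<psi> k l) * w k / w l) summable_on UNIV \<and>
              (\<Sum>\<^sub>\<infinity>l. cmod (gram ip \<psi>d \<psi> k l) * w k / w l) \<le> M)"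

definition H00 :: "(complex \<Rightarrow> 'h::ab_group_add \<Rightarrow> 'h) \<Rightarrow> ('i \<Rightarrow> 'h) \<Rightarrow> 'h set" where
  "H00 sc \<psi>d = {v. \<exists>F c. finite F \<and> v = (\<Sum>k\<in>F. sc (c k) (\<psi>d k))}"

text \<open>Model of the completion of H in sigma(H,H^00): the algebraic space of
  conjugate-linear functionals on H^00 (extended by 0 outside H^00); the pairing
  <Phi, v> is Phi v, and f in H is embedded as v |-> <f,v>.\<close>
definition Hbar :: "(complex \<Rightarrow> 'h::ab_group_add \<Rightarrow> 'h) \<Rightarrow> ('i \<Rightarrow> 'h) \<Rightarrow> ('h \<Rightarrow> complex) set" where
  "Hbar sc \<psi>d = {\<Phi>. (\<forall>u\<in>H00 sc \<psi>d. \<forall>v\<in>H00 sc \<psi>d. \<Phi> (u + v) = \<Phi> u + \<Phi> v) \<and>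
                    (\<forall>a. \<forall>v\<in>H00 sc \<psi>d. \<Phi> (sc a v) = cnj a * \<Phi> v) \<and>
                    (\<forall>v. v \<notin> H00 sc \<psi>d \<longrightarrow> \<Phi> v = 0)}"

definition embed_H :: "(complex \<Rightarrow> 'h::ab_group_add \<Rightarrow> 'h) \<Rightarrow> ('h \<Rightarrow> 'h \<Rightarrow> complex) \<Rightarrow>
   ('i \<Rightarrow> 'h) \<Rightarrow> 'h \<Rightarrow> 'h \<Rightarrow> complex" where
  "embed_H sc ip \<psi>d f = (\<lambda>v. if v \<in> H00 sc \<psi>d then ip f v else 0)"

definition Hinf_w :: "(complex \<Rightarrow> 'h::ab_group_add \<Rightarrow> 'h) \<Rightarrow> ('h \<Rightarrow> 'h \<Rightarrow> complex) \<Rightarrow>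
   ('i \<Rightarrow> 'h) \<Rightarrow> ('i \<Rightarrow> real) \<Rightarrow> ('h \<Rightarrow> complex) set" where
  "Hinf_w sc ip \<psi>d w = {\<Phi> \<in> Hbar sc \<psi>d. \<exists>fs :: nat \<Rightarrow> 'h.
      (\<forall>v\<in>H00 sc \<psi>d. (\<lambda>n. ip (fs n) v) \<longlonglongrightarrow> \<Phi> v) \<and>
      (\<exists>M. \<forall>n k. cmod (ip (fs n) (\<psi>d k)) * w k \<le> M)}"

definition coeff_op :: "('i \<Rightarrow> 'h) \<Rightarrow> ('h \<Rightarrow> complex) \<Rightarrow> 'i \<Rightarrow> complex" where
  "coeff_op \<psi>d \<Phi> = (\<lambda>k. \<Phi> (\<psi>d k))"

end

theory Submission
  imports Defs "HOL-Library.Countable"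
begin

lemma ip_add_left0:
  assumes "complex_hilbert sc ip"
  shows "\<forall>x y z. ip (x + y) z = ip x z + ip y z"
  using assms unfolding complex_hilbert_def by (elim conjE) assumption

lemma ip_add_left:
  assumes "complex_hilbert sc ip"
  shows "ip (x + y) z = ip x z + ip y z"
  using ip_add_left0[OF assms] by blast

lemma ip_sc_left0:
  assumes "complex_hilbert sc ip"
  shows "\<forall>a x y. ip (sc a x) y = a * ip x y"
  using assms unfolding complex_hilbert_def by (elim conjE) assumption

lemma ip_sc_left:
  assumes "complex_hilbert sc ip"
  shows "ip (sc a x) y = a * ip x y"
  using ip_sc_left0[OF assms] by blast

lemma ip_cnj0:
  assumes "complex_hilbert sc ip"
  shows "\<forall>x y. ip y x = cnj (ip x y)"
  using assms unfolding complex_hilbert_def by (elim conjE) assumption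

lemma ip_cnj:
  assumes "complex_hilbert sc ip"
  shows "ip y x = cnj (ip x y)"
  using ip_cnj0[OF assms] by blast

lemma sc_add0:
  assumes "complex_hilbert sc ip"
  shows "\<forall>a x y. sc a (x + y) = sc a x + sc a y"
  using assms unfolding complex_hilbert_def by (elim conjE) assumption

lemma sc_add:
  assumes "complex_hilbert sc ip"
  shows "sc a (x + y) = sc a x + sc a y"
  using sc_add0[OF assms] by blast

lemma sc_mult0:
  assumes "complex_hilbert sc ip"
  shows "\<forall>a b x. sc a (sc b x) = sc (a * b) x"
  using assms unfolding complex_hilbert_def by (elim conjE) assumption

lemma sc_mult:
  assumes "complex_hilbert sc ip"
  shows "sc a (sc b x) = sc (a * b) x"
  using sc_mult0[OF assms] by blast

lemma sc_add_left0:
  assumes "complex_hilbert sc ip"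
  shows "\<forall>a b x. sc (a + b) x = sc a x + sc b x"
  using assms unfolding complex_hilbert_def by (elim conjE) assumption

lemma sc_add_left:
  assumes "complex_hilbert sc ip"
  shows "sc (a + b) x = sc a x + sc b x"
  using sc_add_left0[OF assms] by blast

lemma sc_one0:
  assumes "complex_hilbert sc ip"
  shows "\<forall>x. sc 1 x = x"
  using assms unfolding complex_hilbert_def by (elim conjE) assumption

lemma sc_one:
  assumes "complex_hilbert sc ip"
  shows "sc 1 x = x"
  using sc_one0[OF assms] by blast

lemma ip_add_right:
  assumes "complex_hilbert sc ip"
  shows "ip x (y + z) = ip x y + ip x z"
  using ip_cnj[OF assms, of x "y+z"] ip_cnj[OF assms, of x y] ip_cnj[OF assms, of x z]
    ip_add_left[OF assms, of y z x] by simp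

lemma ip_sc_right:
  assumes "complex_hilbert sc ip"
  shows "ip x (sc a y) = cnj a * ip x y"
  using ip_cnj[OF assms, of x "sc a y"] ip_cnj[OF assms, of x y]
    ip_sc_left[OF assms, of a y x] by simp

lemma ip_zero_right:
  assumes "complex_hilbert sc ip"
  shows "ip x 0 = 0"
  using ip_add_right[OF assms, of x 0 0] by simp

lemma ip_zero_left:
  assumes "complex_hilbert sc ip"
  shows "ip 0 x = 0"
  using ip_add_left[OF assms, of 0 0 x] by simp

lemma ip_sum_right:
  assumes "complex_hilbert sc ip"
  shows "ip x (\<Sum>k\<in>F. g k) = (\<Sum>k\<in>F. ip x (g k))"
  by (induction F rule: infinite_finite_induct)
     (auto simp: ip_zero_right[OF assms] ip_add_right[OF assms])

lemma ip_sum_left: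
  assumes "complex_hilbert sc ip"
  shows "ip (\<Sum>k\<in>F. g k) x = (\<Sum>k\<in>F. ip (g k) x)"
  by (induction F rule: infinite_finite_induct)
     (auto simp: ip_zero_left[OF assms] ip_add_left[OF assms])

lemma sc_zero_right:
  assumes "complex_hilbert sc ip"
  shows "sc a 0 = 0"
  using sc_add[OF assms, of a 0 0] by simp

lemma sc_zero_left:
  assumes "complex_hilbert sc ip"
  shows "sc 0 x = 0"
  using sc_add_left[OF assms, of 0 0 x] by simp

lemma sc_sum:
  assumes "complex_hilbert sc ip"
  shows "sc a (\<Sum>k\<in>F. g k) = (\<Sum>k\<in>F. sc a (g k))"
  by (induction F rule: infinite_finite_induct)
     (auto simp: sc_zero_right[OF assms] sc_add[OF assms])

lemma H00_sc:
  assumes "complex_hilbert sc ip" "v \<in> H00 sc \<psi>d"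
  shows "sc a v \<in> H00 sc \<psi>d"
proof -
  obtain F c where F: "finite F" "v = (\<Sum>k\<in>F. sc (c k) (\<psi>d k))"
    using assms(2) unfolding H00_def by blast
  have "sc a v = (\<Sum>k\<in>F. sc (a * c k) (\<psi>d k))"
    using F by (simp add: sc_sum[OF assms(1)] sc_mult[OF assms(1)])
  thus ?thesis using F(1) unfolding H00_def
    by (intro CollectI exI[of _ F] exI[of _ "\<lambda>k. a * c k"]) simp
qed

lemma H00_add:
  assumes "complex_hilbert sc ip" "u \<in> H00 sc \<psi>d" "v \<in> H00 sc \<psi>d"
  shows "u + v \<in> H00 sc \<psi>d"
proof -
  obtain F c where F: "finite F" "u = (\<Sum>k\<in>F. sc (c k) (\<psi>d k))"
    using assms(2) unfolding H00_def by blast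
  obtain G d where G: "finite G" "v = (\<Sum>k\<in>G. sc (d k) (\<psi>d k))"
    using assms(3) unfolding H00_def by blast
  define c' where "c' k = (if k \<in> F then c k else 0)" for k
  define d' where "d' k = (if k \<in> G then d k else 0)" for k
  have u: "u = (\<Sum>k\<in>F \<union> G. sc (c' k) (\<psi>d k))"
    unfolding F(2) using F(1) G(1)
    by (intro sum.mono_neutral_cong_left) (auto simp: c'_def sc_zero_left[OF assms(1)])
  have v: "v = (\<Sum>k\<in>F \<union> G. sc (d' k) (\<psi>d k))"
    unfolding G(2) using F(1) G(1)
    by (intro sum.mono_neutral_cong_left) (auto simp: d'_def sc_zero_left[OF assms(1)])
  have "u + v = (\<Sum>k\<in>F \<union> G. sc (c' k + d' k) (\<psi>d k))"
    unfolding u v by (simp add: sc_add_left[OF assms(1)] sum.distrib)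
  thus ?thesis using F(1) G(1) unfolding H00_def
    by (intro CollectI exI[of _ "F \<union> G"] exI[of _ "\<lambda>k. c' k + d' k"]) simp
qed

theorem mainTheorem8:
  fixes sc :: "complex \<Rightarrow> 'h::ab_group_add \<Rightarrow> 'h"
    and ip :: "'h \<Rightarrow> 'h \<Rightarrow> complex"
    and \<psi> \<psi>d :: "'i::countable \<Rightarrow> 'h"
    and w :: "'i \<Rightarrow> real"
    and \<alpha> :: "'i \<Rightarrow> complex"
  assumes "complex_hilbert sc ip"
    and "\<forall>k. 0 < w k"
    and "is_dual_frame sc ip \<psi> \<psi>d"
    and "gram_bounded_w ip \<psi>d \<psi> w"
    and "\<alpha> \<in> linf_w w"
    and "\<forall>k. gram_apply ip \<psi>d \<psi> \<alpha> k = \<alpha> k"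
  shows "\<exists>f \<in> Hinf_w sc ip \<psi>d w. coeff_op \<psi>d f = \<alpha>"
proof -
  note H = assms(1)
  have wpos: "\<And>k. 0 < w k" using assms(2) by blast
  obtain M where M: "\<And>k. (\<lambda>l. cmod (gram ip \<psi>d \<psi> k l) * w k / w l) summable_on UNIV"
     "\<And>k. (\<Sum>\<^sub>\<infinity>l. cmod (gram ip \<psi>d \<psi> k l) * w k / w l) \<le> M"
    using assms(4) unfolding gram_bounded_w_def by blast
  obtain Ma where Ma: "\<And>k. cmod (\<alpha> k) * w k \<le> Ma"
    using assms(5) unfolding linf_w_def by blast
  have Ma0: "0 \<le> Ma"
  proof -
    have "0 \<le> cmod (\<alpha> undefined) * w undefined" using wpos[of undefined] by simp
    thus ?thesis using Ma[of undefined] by (rule order_trans)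
  qed
  define F :: "nat \<Rightarrow> 'i set" where "F n = {l. to_nat l < n}" for n
  have finF: "finite (F n)" for n
  proof -
    have "F n = to_nat -` {..<n}" unfolding F_def by auto
    thus ?thesis by (simp add: finite_vimageI)
  qed
  have limF: "filterlim F (finite_subsets_at_top UNIV) sequentially"
    unfolding filterlim_finite_subsets_at_top
  proof (safe)
    fix X :: "'i set" assume X: "finite X"
    define n where "n = Suc (Max (to_nat ` X))"
    have "X \<subseteq> F m" if "m \<ge> n" for m
    proof
      fix x assume "x \<in> X"
      hence "to_nat x \<le> Max (to_nat ` X)" using X by auto
      thus "x \<in> F m" using that unfolding F_def n_def by auto
    qed
    hence "\<forall>\<^sub>F y in sequentially. X \<subseteq> F y"
      using eventually_ge_at_top[of n] by (rule eventually_mono[rotated]) 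
    thus "\<forall>\<^sub>F y in sequentially. finite (F y) \<and> X \<subseteq> F y \<and> F y \<subseteq> UNIV"
      using finF by (auto elim: eventually_mono)
  qed
  define fs where "fs n = (\<Sum>l\<in>F n. sc (\<alpha> l) (\<psi> l))" for n
  have ipfs: "ip (fs n) (\<psi>d k) = (\<Sum>l\<in>F n. gram ip \<psi>d \<psi> k l * \<alpha> l)" for n k
    unfolding fs_def gram_def by (simp add: ip_sum_left[OF H] ip_sc_left[OF H] mult.commute)
  have summ: "(\<lambda>l. gram ip \<psi>d \<psi> k l * \<alpha> l) summable_on UNIV" for k
  proof (rule abs_summable_summable)
    have s: "(\<lambda>l. cmod (gram ip \<psi>d \<psi> k l) * w k / w l * (Ma / w k)) summable_on UNIV"
      using M(1)[of k] by (rule summable_on_cmult_left)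
    show "(\<lambda>l. norm (gram ip \<psi>d \<psi> k l * \<alpha> l)) summable_on UNIV"
    proof (rule summable_on_comparison_test[OF s])
      fix l
      have "cmod (\<alpha> l) \<le> Ma / w l" using Ma[of l] wpos[of l] by (simp add: field_simps)
      hence "cmod (gram ip \<psi>d \<psi> k l) * cmod (\<alpha> l) \<le> cmod (gram ip \<psi>d \<psi> k l) * (Ma / w l)"
        by (intro mult_left_mono) auto
      also have "\<dots> = cmod (gram ip \<psi>d \<psi> k l) * w k / w l * (Ma / w k)"
        using wpos[of k] by (simp add: field_simps)
      finally show "norm (gram ip \<psi>d \<psi> k l * \<alpha> l) \<le> cmod (gram ip \<psi>d \<psi> k l) * w k / w l * (Ma / w k)"
        by (simp add: norm_mult)
    qed auto
  qed
  have conv: "(\<lambda>n. ip (fs n) (\<psi>d k)) \<longlonglongrightarrow> \<alpha> k" for k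
  proof -
    have "((\<lambda>G. \<Sum>l\<in>G. gram ip \<psi>d \<psi> k l * \<alpha> l) \<longlongrightarrow> gram_apply ip \<psi>d \<psi> \<alpha> k) (finite_subsets_at_top UNIV)"
      using summ[of k] unfolding gram_apply_def has_sum_def[symmetric] by (rule has_sum_infsum)
    from filterlim_compose[OF this limF]
    have "(\<lambda>n. \<Sum>l\<in>F n. gram ip \<psi>d \<psi> k l * \<alpha> l) \<longlonglongrightarrow> gram_apply ip \<psi>d \<psi> \<alpha> k" .
    thus ?thesis using assms(6) by (simp add: ipfs)
  qed
  have bound: "cmod (ip (fs n) (\<psi>d k)) * w k \<le> Ma * M" for n k
  proof -
    have nn: "0 \<le> cmod (gram ip \<psi>d \<psi> k l) * w k / w l" for l
      using wpos[of k] wpos[of l] by (intro divide_nonneg_pos mult_nonneg_nonneg) auto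
    have "cmod (ip (fs n) (\<psi>d k)) * w k \<le> (\<Sum>l\<in>F n. cmod (gram ip \<psi>d \<psi> k l) * cmod (\<alpha> l)) * w k"
      unfolding ipfs using wpos[of k]
      by (intro mult_right_mono) (auto intro: order_trans[OF norm_sum] simp: norm_mult)
    also have "\<dots> = (\<Sum>l\<in>F n. cmod (gram ip \<psi>d \<psi> k l) * w k / w l * (cmod (\<alpha> l) * w l))"
      unfolding sum_distrib_right
    proof (intro sum.cong refl)
      fix l
      have "w l \<noteq> 0" using wpos[of l] by simp
      thus "cmod (gram ip \<psi>d \<psi> k l) * cmod (\<alpha> l) * w k = cmod (gram ip \<psi>d \<psi> k l) * w k / w l * (cmod (\<alpha> l) * w l)"
        by (simp add: field_simps)
    qed
    also have "\<dots> \<le> (\<Sum>l\<in>F n. cmod (gram ip \<psi>d \<psi> k l) * w k / w l * Ma)"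
      using nn by (intro sum_mono mult_left_mono Ma) auto
    also have "\<dots> = (\<Sum>l\<in>F n. cmod (gram ip \<psi>d \<psi> k l) * w k / w l) * Ma"
      by (simp add: sum_distrib_right)
    also have "\<dots> \<le> (\<Sum>\<^sub>\<infinity>l. cmod (gram ip \<psi>d \<psi> k l) * w k / w l) * Ma"
      using nn Ma0 by (intro mult_right_mono finite_sum_le_infsum M(1) finF) auto
    also have "\<dots> \<le> M * Ma" using M(2) Ma0 by (intro mult_right_mono) auto
    finally show ?thesis by (simp add: mult.commute)
  qed
  have convH: "convergent (\<lambda>n. ip (fs n) v)" if "v \<in> H00 sc \<psi>d" for v
  proof -
    have ex: "\<exists>G c. finite G \<and> v = (\<Sum>k\<in>G. sc (c k) (\<psi>d k))"
      using that by (simp add: H00_def)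
    then obtain G c where G: "finite G" "v = (\<Sum>k\<in>G. sc (c k) (\<psi>d k))"
      by (elim exE conjE)
    have eq: "(\<lambda>n. ip (fs n) v) = (\<lambda>n. \<Sum>k\<in>G. cnj (c k) * ip (fs n) (\<psi>d k))"
      unfolding G(2) by (rule ext) (simp only: ip_sum_right[OF H] ip_sc_right[OF H])
    have "(\<lambda>n. \<Sum>k\<in>G. cnj (c k) * ip (fs n) (\<psi>d k)) \<longlonglongrightarrow> (\<Sum>k\<in>G. cnj (c k) * \<alpha> k)"
      by (rule tendsto_sum, rule tendsto_mult_left, rule conv)
    thus ?thesis unfolding eq by (rule convergentI)
  qed
  define \<Phi> where "\<Phi> v = (if v \<in> H00 sc \<psi>d then lim (\<lambda>n. ip (fs n) v) else 0)" for v
  have PhiT: "(\<lambda>n. ip (fs n) v) \<longlonglongrightarrow> \<Phi> v" if "v \<in> H00 sc \<psi>d" for v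
    using convH[OF that] that unfolding \<Phi>_def by (simp add: convergent_LIMSEQ_iff)
  have inH: "\<Phi> \<in> Hbar sc \<psi>d"
    unfolding Hbar_def
  proof (intro CollectI conjI ballI allI impI)
    fix u v assume uv: "u \<in> H00 sc \<psi>d" "v \<in> H00 sc \<psi>d"
    have "(\<lambda>n. ip (fs n) (u + v)) \<longlonglongrightarrow> \<Phi> u + \<Phi> v"
      using tendsto_add[OF PhiT[OF uv(1)] PhiT[OF uv(2)]] by (simp add: ip_add_right[OF H])
    thus "\<Phi> (u + v) = \<Phi> u + \<Phi> v" using PhiT[OF H00_add[OF H uv]] LIMSEQ_unique by blast
  next
    fix a v assume v: "v \<in> H00 sc \<psi>d"
    have "(\<lambda>n. ip (fs n) (sc a v)) \<longlonglongrightarrow> cnj a * \<Phi> v"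
      using tendsto_mult[OF tendsto_const PhiT[OF v], of "cnj a"] by (simp add: ip_sc_right[OF H])
    thus "\<Phi> (sc a v) = cnj a * \<Phi> v" using PhiT[OF H00_sc[OF H v]] LIMSEQ_unique by blast
  next
    fix v assume "v \<notin> H00 sc \<psi>d" thus "\<Phi> v = 0" unfolding \<Phi>_def by simp
  qed
  have psid_in: "\<psi>d k \<in> H00 sc \<psi>d" for k
  proof -
    have "\<psi>d k = (\<Sum>j\<in>{k}. sc 1 (\<psi>d j))" by (simp add: sc_one[OF H])
    thus ?thesis unfolding H00_def
      by (intro CollectI exI[of _ "{k}"] exI[of _ "\<lambda>j. 1"]) simp
  qed
  have "\<Phi> \<in> Hinf_w sc ip \<psi>d w"
    unfolding Hinf_w_def mem_Collect_eq using inH PhiT bound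
    by (intro conjI exI[of _ fs] exI[of _ "Ma * M"] ballI allI) auto
  moreover have "coeff_op \<psi>d \<Phi> = \<alpha>"
    unfolding coeff_op_def by (intro ext) (rule LIMSEQ_unique[OF PhiT[OF psid_in] conv])
  ultimately show ?thesis by blast
qed

end
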